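(* Let $A$ be a bialgebra over a commutative ring $\Bbbk$ with product $\mu$, unit $1_A$, coproduct $\Delta a=a^{(1)}\otimes a^{(2)}$ and counit $\varepsilon$. Let $\mathcal{O}^A$ be the operad with multiplication with $\mathcal{O}^A(n)=\mathrm{Hom}_\Bbbk(A^{\otimes n},\Bbbk)$, partial compositions, for $f\in\mathcal{O}^A(m)$, $g\in\mathcal{O}^A(n)$, $$(f\circ_i g)(a_1\otimes\dots\otimes a_{m+n-1})=f\big(a_1\otimes\dots\otimes a_{i-1}\otimes a_i^{(1)}\cdots a_{i+n-1}^{(1)}\,g(a_i^{(2)}\otimes\dots\otimes a_{i+n-1}^{(2)})\otimes a_{i+n}\otimes\dots\otimes a_{m+n-1}\big),$$ identity $\varepsilon$, multiplication $\varepsilon\circ\mu$ and $e=\mathrm{id}_\Bbbk$; its cochain complex is the dual $(BA)^\vee$ of the bar construction, with cohomology $\mathrm{Ext}^*_A(\Bbbk,\Bbbk)$, which thus carries a Gerstenhaber algebra structure. Let $\mathcal{E}nd(A)$ be the operad with multiplication $\mathcal{E}nd(A)(n)=\mathrm{Hom}_\Bbbk(A^{\otimes n},A)$, $\gamma(f;g_1,\dots,g_n)=f\circ(g_1\otimes\dots\otimes g_n)$, identity $\mathrm{id}_A$, multiplication $\mu$, $e$ the unit $\Bbbk\to A$; its cochain complex is the Hochschild cochain complex $\mathcal{C}^*(A,A)$, so $HH^*(A,A)$ is a Gerstenhaber algebra. Then the maps $lift:\mathrm{Hom}(A^{\otimes n},\Bbbk)\to\mathrm{Hom}(A^{\otimes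 n},A)$, $lift(f)(a_1\otimes\dots\otimes a_n)=a_1^{(1)}\cdots a_n^{(1)}f(a_1^{(2)}\otimes\dots\otimes a_n^{(2)})$, induce an injective morphism of Gerstenhaber algebras $\mathrm{Ext}^*_A(\Bbbk,\Bbbk)\hookrightarrow HH^*(A,A)$; i.e. $\mathrm{Ext}^*_A(\Bbbk,\Bbbk)$ is a sub Gerstenhaber algebra of $HH^*(A,A)$.
   Context: A (non-symmetric, $\Bbbk$-linear) operad $O$ consists of $\Bbbk$-modules $O(n)$, $n\ge0$, an identity $id\in O(1)$ and associative unital partial compositions $\circ_i:O(m)\otimes O(n)\to O(m+n-1)$. An operad with multiplication has $\mu\in O(2)$, $e\in O(0)$ with $\mu\circ_1\mu=\mu\circ_2\mu$, $\mu\circ_1e=id=\mu\circ_2e$. Its cochain complex $\mathcal{C}^*(O)$: $O(n)$ in degree $n$, $df=\mu\circ_2f+\sum_{i=1}^n(-1)^if\circ_i\mu+(-1)^{n+1}\mu\circ_1f$. Cup product $f\cup g=(\mu\circ_1f)\circ_{m+1}g$ and bracket $\{f,g\}=f\bar\circ g-(-1)^{(m-1)(n-1)}g\bar\circ f$, $f\bar\circ g=(-1)^{(m-1)(n-1)}\sum_{i=1}^m(-1)^{(n-1)(i-1)}f\circ_ig$, make $H(\mathcal{C}^*(O))$ a Gerstenhaber algebra; morphisms of operads with multiplication induce morphisms of Gerstenhaber algebras. *)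

theory Defs
  imports Main "HOL.Modules" "HOL-Library.Poly_Mapping" "HOL-Library.Function_Algebras"
begin

section \<open>Tensor powers of A, presented by generators and relations\<close>

text \<open>Elements of the free k-module on tuples (lists) of elements of A.  The
  tuple [a1,...,an] stands for the pure tensor a1 (x) ... (x) an.\<close>

definition pt :: "'a list \<Rightarrow> ('a list \<Rightarrow>\<^sub>0 'k::comm_ring_1)" where
  "pt xs = Poly_Mapping.single xs 1"

text \<open>The k-submodule of multilinearity relations (k acts on A by sm).\<close>
inductive_set tnull :: "('k::comm_ring_1 \<Rightarrow> 'a::ab_group_add \<Rightarrow> 'a) \<Rightarrow> ('a list \<Rightarrow>\<^sub>0 'k) set"
  for sm where
  tnull_zero: "0 \<in> tnull sm"
| tnull_add_rel: "Poly_Mapping.single (us @ (a + b) # vs) c - Poly_Mapping.single (us @ a # vs) c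
      - Poly_Mapping.single (us @ b # vs) c \<in> tnull sm"
| tnull_smul_rel: "Poly_Mapping.single (us @ sm r a # vs) c - Poly_Mapping.single (us @ a # vs) (r * c)
      \<in> tnull sm"
| tnull_sum: "x \<in> tnull sm \<Longrightarrow> y \<in> tnull sm \<Longrightarrow> x + y \<in> tnull sm"

text \<open>Equality in the tensor power A (x) ... (x) A (over k).\<close>
definition teq :: "('k::comm_ring_1 \<Rightarrow> 'a::ab_group_add \<Rightarrow> 'a) \<Rightarrow> ('a list \<Rightarrow>\<^sub>0 'k) \<Rightarrow> ('a list \<Rightarrow>\<^sub>0 'k) \<Rightarrow> bool" where
  "teq sm x y \<longleftrightarrow> x - y \<in> tnull sm"

text \<open>The coproduct is given in Sweedler form: cop a is a finite list of pairs (x,y)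
  with Delta a = sum of x (x) y over the list.  Only its class in A (x) A matters.\<close>

definition dsum :: "('a \<Rightarrow> ('a \<times> 'a) list) \<Rightarrow> 'a \<Rightarrow> ('a list \<Rightarrow>\<^sub>0 'k::comm_ring_1)" where
  "dsum cop a = sum_list (map (\<lambda>(x, y). pt [x, y]) (cop a))"

definition bialgebra ::
  "('k::comm_ring_1 \<Rightarrow> 'a::ring_1 \<Rightarrow> 'a) \<Rightarrow> ('a \<Rightarrow> ('a \<times> 'a) list) \<Rightarrow> ('a \<Rightarrow> 'k) \<Rightarrow> bool" where
  "bialgebra sm cop eps \<longleftrightarrow>
     \<comment> \<open>A is a k-algebra\<close>
     module sm \<and>
     (\<forall>r a b. sm r (a * b) = sm r a * b \<and> sm r (a * b) = a * sm r b) \<and>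
     \<comment> \<open>Delta is k-linear\<close>
     (\<forall>a b. teq sm (dsum cop (a + b)) (dsum cop a + dsum cop b)) \<and>
     (\<forall>r a. teq sm (dsum cop (sm r a))
              (sum_list (map (\<lambda>(x, y). Poly_Mapping.single [x, y] r) (cop a)))) \<and>
     \<comment> \<open>coassociativity\<close>
     (\<forall>a. teq sm
        (sum_list (map (\<lambda>(x, y). sum_list (map (\<lambda>(u, v). pt [u, v, y]) (cop x))) (cop a)))
        (sum_list (map (\<lambda>(x, y). sum_list (map (\<lambda>(u, v). pt [x, u, v]) (cop y))) (cop a)))) \<and>
     \<comment> \<open>counit\<close>
     (\<forall>a. sum_list (map (\<lambda>(x, y). sm (eps x) y) (cop a)) = a) \<and>
     (\<forall>a. sum_list (map (\<lambda>(x, y). sm (eps y) x) (cop a)) = a) \<and>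
     \<comment> \<open>epsilon is a k-algebra map\<close>
     (\<forall>a b. eps (a + b) = eps a + eps b) \<and>
     (\<forall>r a. eps (sm r a) = r * eps a) \<and>
     (\<forall>a b. eps (a * b) = eps a * eps b) \<and>
     eps 1 = 1 \<and>
     \<comment> \<open>Delta is an algebra map\<close>
     (\<forall>a b. teq sm (dsum cop (a * b))
        (sum_list (map (\<lambda>(x, y). sum_list (map (\<lambda>(u, v). pt [x * u, y * v]) (cop b))) (cop a)))) \<and>
     teq sm (dsum cop 1) (pt [1, 1])"

text \<open>An element of Hom(A^{(x)n},M) is represented by the k-multilinear function on
  lists of length n, extended by 0 to lists of other lengths.\<close>

definition cochain ::
  "('k::comm_ring_1 \<Rightarrow> 'a::ab_group_add \<Rightarrow> 'a) \<Rightarrow> ('k \<Rightarrow> 'm::ab_group_add \<Rightarrow> 'm) \<Rightarrow> nat \<Rightarrow> ('a list \<Rightarrow> 'm) \<Rightarrow> bool" where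
  "cochain sm sc n f \<longleftrightarrow>
     (\<forall>xs. length xs \<noteq> n \<longrightarrow> f xs = 0) \<and>
     (\<forall>us vs a b. length us + length vs + 1 = n \<longrightarrow>
        f (us @ (a + b) # vs) = f (us @ a # vs) + f (us @ b # vs)) \<and>
     (\<forall>us vs r a. length us + length vs + 1 = n \<longrightarrow>
        f (us @ sm r a # vs) = sc r (f (us @ a # vs)))"

section \<open>Generic cochain complex, cup product and bracket of an operad with multiplication\<close>

text \<open>cmp m n i f g stands for f \<circ>_i g with f in O(m), g in O(n).\<close>

definition sgnc :: "int \<Rightarrow> 'c::ab_group_add \<Rightarrow> 'c" where
  "sgnc k x = (if even k then x else - x)"

definition opd :: "(nat \<Rightarrow> nat \<Rightarrow> nat \<Rightarrow> 'c \<Rightarrow> 'c \<Rightarrow> 'c) \<Rightarrow> 'c \<Rightarrow> nat \<Rightarrow> 'c \<Rightarrow> 'c::ab_group_add" where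
  "opd cmp mu n f = cmp 2 n 2 mu f + (\<Sum>i\<in>{1..n}. sgnc (int i) (cmp n 2 i f mu))
       + sgnc (int n + 1) (cmp 2 n 1 mu f)"

definition opcup :: "(nat \<Rightarrow> nat \<Rightarrow> nat \<Rightarrow> 'c \<Rightarrow> 'c \<Rightarrow> 'c) \<Rightarrow> 'c \<Rightarrow> nat \<Rightarrow> nat \<Rightarrow> 'c \<Rightarrow> 'c \<Rightarrow> 'c" where
  "opcup cmp mu m n f g = cmp (m + 1) n (m + 1) (cmp 2 m 1 mu f) g"

definition opbar :: "(nat \<Rightarrow> nat \<Rightarrow> nat \<Rightarrow> 'c \<Rightarrow> 'c \<Rightarrow> 'c) \<Rightarrow> nat \<Rightarrow> nat \<Rightarrow> 'c \<Rightarrow> 'c \<Rightarrow> 'c::ab_group_add" where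
  "opbar cmp m n f g = sgnc ((int m - 1) * (int n - 1))
      (\<Sum>i\<in>{1..m}. sgnc ((int n - 1) * (int i - 1)) (cmp m n i f g))"

definition opbr :: "(nat \<Rightarrow> nat \<Rightarrow> nat \<Rightarrow> 'c \<Rightarrow> 'c \<Rightarrow> 'c) \<Rightarrow> nat \<Rightarrow> nat \<Rightarrow> 'c \<Rightarrow> 'c \<Rightarrow> 'c::ab_group_add" where
  "opbr cmp m n f g = opbar cmp m n f g - sgnc ((int m - 1) * (int n - 1)) (opbar cmp n m g f)"

text \<open>Cocycles and cohomologous cocycles (equality in H^n); P n is the predicate
  \<open>element of O(n)\<close>.\<close>

definition cocyc :: "(nat \<Rightarrow> 'c \<Rightarrow> bool) \<Rightarrow> (nat \<Rightarrow> nat \<Rightarrow> nat \<Rightarrow> 'c \<Rightarrow> 'c \<Rightarrow> 'c) \<Rightarrow> 'c \<Rightarrow> nat \<Rightarrow> 'c::ab_group_add \<Rightarrow> bool" where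
  "cocyc P cmp mu n f \<longleftrightarrow> P n f \<and> opd cmp mu n f = 0"

definition cohom :: "(nat \<Rightarrow> 'c \<Rightarrow> bool) \<Rightarrow> (nat \<Rightarrow> nat \<Rightarrow> nat \<Rightarrow> 'c \<Rightarrow> 'c \<Rightarrow> 'c) \<Rightarrow> 'c \<Rightarrow> nat \<Rightarrow> 'c \<Rightarrow> 'c::ab_group_add \<Rightarrow> bool" where
  "cohom P cmp mu n f g \<longleftrightarrow>
     (if n = 0 then f = g else (\<exists>h. P (n - 1) h \<and> f - g = opd cmp mu (n - 1) h))"

definition swsum :: "('a \<Rightarrow> ('a \<times> 'a) list) \<Rightarrow> 'a list \<Rightarrow> (('a \<times> 'a) list \<Rightarrow> 'b::monoid_add) \<Rightarrow> 'b" where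
  "swsum cop as F = sum_list (map F (product_lists (map cop as)))"

text \<open>The operad O^A, O^A(n) = Hom(A^{(x)n}, k).\<close>
definition OA_comp :: "('k::comm_ring_1 \<Rightarrow> 'a::ring_1 \<Rightarrow> 'a) \<Rightarrow> ('a \<Rightarrow> ('a \<times> 'a) list)
    \<Rightarrow> nat \<Rightarrow> nat \<Rightarrow> nat \<Rightarrow> ('a list \<Rightarrow> 'k) \<Rightarrow> ('a list \<Rightarrow> 'k) \<Rightarrow> ('a list \<Rightarrow> 'k)" where
  "OA_comp sm cop m n i f g = (\<lambda>xs.
     if length xs = m + n - 1 \<and> 1 \<le> i \<and> i \<le> m then
       swsum cop (take n (drop (i - 1) xs))
         (\<lambda>ch. f (take (i - 1) xs @ sm (g (map snd ch)) (prod_list (map fst ch)) # drop (i - 1 + n) xs))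
     else 0)"

definition OA_mu :: "('a::ring_1 \<Rightarrow> 'k::comm_ring_1) \<Rightarrow> 'a list \<Rightarrow> 'k" where
  "OA_mu eps = (\<lambda>xs. if length xs = 2 then eps (xs ! 0 * xs ! 1) else 0)"

definition OA_e :: "'a list \<Rightarrow> 'k::comm_ring_1" where
  "OA_e = (\<lambda>xs. if xs = [] then 1 else 0)"

text \<open>The endomorphism operad End(A), End(A)(n) = Hom(A^{(x)n}, A).\<close>
definition End_comp :: "nat \<Rightarrow> nat \<Rightarrow> nat \<Rightarrow> ('a list \<Rightarrow> 'a::ring_1) \<Rightarrow> ('a list \<Rightarrow> 'a) \<Rightarrow> ('a list \<Rightarrow> 'a)" where
  "End_comp m n i f g = (\<lambda>xs.
     if length xs = m + n - 1 \<and> 1 \<le> i \<and> i \<le> m then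
       f (take (i - 1) xs @ g (take n (drop (i - 1) xs)) # drop (i - 1 + n) xs)
     else 0)"

definition End_mu :: "'a list \<Rightarrow> 'a::ring_1" where
  "End_mu = (\<lambda>xs. if length xs = 2 then xs ! 0 * xs ! 1 else 0)"

definition End_e :: "'a list \<Rightarrow> 'a::ring_1" where
  "End_e = (\<lambda>xs. if xs = [] then 1 else 0)"

definition lift :: "('k::comm_ring_1 \<Rightarrow> 'a::ring_1 \<Rightarrow> 'a) \<Rightarrow> ('a \<Rightarrow> ('a \<times> 'a) list)
    \<Rightarrow> nat \<Rightarrow> ('a list \<Rightarrow> 'k) \<Rightarrow> ('a list \<Rightarrow> 'a)" where
  "lift sm cop n f = (\<lambda>xs.
     if length xs = n then swsum cop xs (\<lambda>ch. sm (f (map snd ch)) (prod_list (map fst ch)))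
     else 0)"

definition ExtCocycle where
  "ExtCocycle sm cop eps = cocyc (cochain sm (*)) (OA_comp sm cop) (OA_mu eps)"
definition ExtEq where
  "ExtEq sm cop eps = cohom (cochain sm (*)) (OA_comp sm cop) (OA_mu eps)"
definition HHCocycle where
  "HHCocycle sm = cocyc (cochain sm sm) End_comp End_mu"
definition HHEq where
  "HHEq sm = cohom (cochain sm sm) End_comp End_mu"

end

theory Submission
  imports Defs
begin

definition Lf :: "('k::comm_ring_1 \<Rightarrow> 'v::ab_group_add \<Rightarrow> 'v) \<Rightarrow> ('a list \<Rightarrow> 'v) \<Rightarrow> ('a list \<Rightarrow>\<^sub>0 'k) \<Rightarrow> 'v" where
  "Lf sc \<phi> p = (\<Sum>xs\<in>Poly_Mapping.keys p. sc (Poly_Mapping.lookup p xs) (\<phi> xs))"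

definition fml :: "('k::comm_ring_1 \<Rightarrow> 'a::ab_group_add \<Rightarrow> 'a) \<Rightarrow> ('k \<Rightarrow> 'v::ab_group_add \<Rightarrow> 'v) \<Rightarrow> ('a list \<Rightarrow> 'v) \<Rightarrow> bool" where
  "fml sm sc \<phi> \<longleftrightarrow> (\<forall>us vs a b. \<phi> (us@(a+b)#vs) = \<phi> (us@a#vs) + \<phi> (us@b#vs)) \<and>
     (\<forall>us vs r a. \<phi> (us@sm r a#vs) = sc r (\<phi> (us@a#vs)))"

definition bil :: "('k::comm_ring_1 \<Rightarrow> 'a::ab_group_add \<Rightarrow> 'a) \<Rightarrow> ('k \<Rightarrow> 'v::ab_group_add \<Rightarrow> 'v) \<Rightarrow> ('a \<Rightarrow> 'a \<Rightarrow> 'v) \<Rightarrow> bool" where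
  "bil sm sc \<psi> \<longleftrightarrow> (\<forall>x x' y. \<psi> (x+x') y = \<psi> x y + \<psi> x' y) \<and> (\<forall>x y y'. \<psi> x (y+y') = \<psi> x y + \<psi> x y') \<and>
     (\<forall>r x y. \<psi> (sm r x) y = sc r (\<psi> x y)) \<and> (\<forall>r x y. \<psi> x (sm r y) = sc r (\<psi> x y))"

definition tril :: "('k::comm_ring_1 \<Rightarrow> 'a::ab_group_add \<Rightarrow> 'a) \<Rightarrow> ('k \<Rightarrow> 'v::ab_group_add \<Rightarrow> 'v) \<Rightarrow> ('a \<Rightarrow> 'a \<Rightarrow> 'a \<Rightarrow> 'v) \<Rightarrow> bool" where
  "tril sm sc \<psi> \<longleftrightarrow> (\<forall>y z. bil sm sc (\<lambda>x x'. \<psi> x x' z) \<and> bil sm sc (\<lambda>x' z. \<psi> y x' z))"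

lemma scale_sum_list:
  assumes "module sc" shows "sc r (sum_list (map f l)) = sum_list (map (\<lambda>x. sc r (f x)) l)"
proof -
  interpret V: module sc by fact
  show ?thesis by (induction l) (simp_all add: V.scale_right_distrib)
qed

lemma scale_sum_list_left:
  assumes "module sc" shows "sc (sum_list (map f l)) v = sum_list (map (\<lambda>x. sc (f x) v) l)"
proof -
  interpret V: module sc by fact
  show ?thesis by (induction l) (simp_all add: V.scale_left_distrib)
qed

lemma Lf_eq:
  assumes "module sc" "finite S" "Poly_Mapping.keys p \<subseteq> S"
  shows "Lf sc \<phi> p = (\<Sum>xs\<in>S. sc (Poly_Mapping.lookup p xs) (\<phi> xs))"
proof -
  interpret V: module sc by fact
  show ?thesis unfolding Lf_def
    by (rule sum.mono_neutral_left) (use assms in \<open>auto simp: in_keys_iff\<close>)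
qed

lemma Lf_add: assumes "module sc" shows "Lf sc \<phi> (p + q) = Lf sc \<phi> p + Lf sc \<phi> q"
proof -
  interpret V: module sc by fact
  let ?S = "Poly_Mapping.keys p \<union> Poly_Mapping.keys q"
  have "Lf sc \<phi> (p + q) = (\<Sum>xs\<in>?S. sc (Poly_Mapping.lookup (p+q) xs) (\<phi> xs))"
    by (rule Lf_eq[OF assms]) (auto dest: keys_add[THEN subsetD])
  also have "\<dots> = (\<Sum>xs\<in>?S. sc (Poly_Mapping.lookup p xs) (\<phi> xs)) + (\<Sum>xs\<in>?S. sc (Poly_Mapping.lookup q xs) (\<phi> xs))"
    by (simp add: lookup_add V.scale_left_distrib sum.distrib)
  also have "\<dots> = Lf sc \<phi> p + Lf sc \<phi> q"
    by (subst (1 2) Lf_eq[OF assms, of ?S]) auto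
  finally show ?thesis .
qed

lemma Lf_diff: assumes "module sc" shows "Lf sc \<phi> (p - q) = Lf sc \<phi> p - Lf sc \<phi> q"
proof -
  interpret V: module sc by fact
  let ?S = "Poly_Mapping.keys p \<union> Poly_Mapping.keys q"
  have "Lf sc \<phi> (p - q) = (\<Sum>xs\<in>?S. sc (Poly_Mapping.lookup (p-q) xs) (\<phi> xs))"
    by (rule Lf_eq[OF assms]) (auto dest: keys_diff[THEN subsetD])
  also have "\<dots> = (\<Sum>xs\<in>?S. sc (Poly_Mapping.lookup p xs) (\<phi> xs)) - (\<Sum>xs\<in>?S. sc (Poly_Mapping.lookup q xs) (\<phi> xs))"
    by (simp add: lookup_minus V.scale_left_diff_distrib sum_subtractf)
  also have "\<dots> = Lf sc \<phi> p - Lf sc \<phi> q"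
    by (subst (1 2) Lf_eq[OF assms, of ?S]) auto
  finally show ?thesis .
qed

lemma Lf_zero: "Lf sc \<phi> 0 = 0"
  by (simp add: Lf_def)

lemma Lf_single: assumes "module sc" shows "Lf sc \<phi> (Poly_Mapping.single xs c) = sc c (\<phi> xs)"
proof -
  interpret V: module sc by fact
  show ?thesis by (simp add: Lf_def)
qed

lemma Lf_sum_list: assumes "module sc"
  shows "Lf sc \<phi> (sum_list (map g l)) = sum_list (map (\<lambda>z. Lf sc \<phi> (g z)) l)"
  by (induction l) (simp_all add: Lf_zero Lf_add[OF assms])

lemma Lf_tnull:
  assumes "module sc" "fml sm sc \<phi>" "x \<in> tnull sm"
  shows "Lf sc \<phi> x = 0"
  using assms(3)
proof (induction rule: tnull.induct)
  interpret V: module sc by fact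
  case tnull_zero then show ?case by (simp add: Lf_zero)
next
  interpret V: module sc by fact
  case (tnull_add_rel us a b vs c)
  then show ?case using assms(2)
    by (simp add: Lf_diff[OF assms(1)] Lf_single[OF assms(1)] fml_def V.scale_right_distrib)
next
  interpret V: module sc by fact
  case (tnull_smul_rel us r a vs c)
  then show ?case using assms(2)
    by (simp add: Lf_diff[OF assms(1)] Lf_single[OF assms(1)] fml_def mult.commute)
next
  case (tnull_sum x y) then show ?case by (simp add: Lf_add[OF assms(1)])
qed

lemma Lf_teq:
  assumes "module sc" "fml sm sc \<phi>" "teq sm p q"
  shows "Lf sc \<phi> p = Lf sc \<phi> q"
proof -
  have "Lf sc \<phi> (p - q) = 0" using Lf_tnull[OF assms(1,2)] assms(3) unfolding teq_def by blast
  then show ?thesis by (simp add: Lf_diff[OF assms(1)])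
qed

definition phi2 :: "('a \<Rightarrow> 'a \<Rightarrow> 'v::zero) \<Rightarrow> 'a list \<Rightarrow> 'v" where
  "phi2 \<psi> xs = (if length xs = 2 then \<psi> (xs!0) (xs!1) else 0)"
definition phi3 :: "('a \<Rightarrow> 'a \<Rightarrow> 'a \<Rightarrow> 'v::zero) \<Rightarrow> 'a list \<Rightarrow> 'v" where
  "phi3 \<psi> xs = (if length xs = 3 then \<psi> (xs!0) (xs!1) (xs!2) else 0)"

lemma len_cases2: "length (us @ c # vs) = 2 \<Longrightarrow> (us = [] \<and> (\<exists>v. vs = [v])) \<or> ((\<exists>u. us = [u]) \<and> vs = [])"
  by (cases us; cases vs) auto

lemma len_cases3: "length (us @ c # vs) = 3 \<Longrightarrow> (us = [] \<and> (\<exists>v w. vs = [v,w])) \<or> ((\<exists>u. us = [u]) \<and> (\<exists>v. vs = [v])) \<or> ((\<exists>u u'. us = [u,u']) \<and> vs = [])"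
  apply (cases us; cases vs)
     apply auto
   apply (case_tac list; auto)
  apply (case_tac list; auto)
  done

lemma fml_phi2: assumes "module sc" "bil sm sc \<psi>" shows "fml sm sc (phi2 \<psi>)"
proof -
  interpret V: module sc by fact
  show ?thesis unfolding fml_def
  proof (intro conjI allI)
    fix us vs and a b
    show "phi2 \<psi> (us @ (a + b) # vs) = phi2 \<psi> (us @ a # vs) + phi2 \<psi> (us @ b # vs)"
    proof (cases "length (us @ (a + b) # vs) = 2")
      case True
      then show ?thesis using len_cases2[OF True] assms(2) by (auto simp: phi2_def bil_def)
    qed (simp add: phi2_def)
  next
    fix us vs and a r
    show "phi2 \<psi> (us @ sm r a # vs) = sc r (phi2 \<psi> (us @ a # vs))"
    proof (cases "length (us @ a # vs) = 2")
      case True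
      then show ?thesis using len_cases2[OF True] assms(2) by (auto simp: phi2_def bil_def)
    qed (simp add: phi2_def)
  qed
qed

lemma fml_phi3: assumes "module sc" "tril sm sc \<psi>" shows "fml sm sc (phi3 \<psi>)"
proof -
  interpret V: module sc by fact
  show ?thesis unfolding fml_def
  proof (intro conjI allI)
    fix us vs and a b
    show "phi3 \<psi> (us @ (a + b) # vs) = phi3 \<psi> (us @ a # vs) + phi3 \<psi> (us @ b # vs)"
    proof (cases "length (us @ (a + b) # vs) = 3")
      case True
      then show ?thesis using len_cases3[OF True] assms(2) by (auto simp: phi3_def tril_def bil_def)
    qed (simp add: phi3_def)
  next
    fix us vs and a r
    show "phi3 \<psi> (us @ sm r a # vs) = sc r (phi3 \<psi> (us @ a # vs))"
    proof (cases "length (us @ a # vs) = 3")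
      case True
      then show ?thesis using len_cases3[OF True] assms(2) by (auto simp: phi3_def tril_def bil_def)
    qed (simp add: phi3_def)
  qed
qed

lemma module_mult: "module ((*) :: 'k::comm_ring_1 \<Rightarrow> 'k \<Rightarrow> 'k)"
  by standard (simp_all add: algebra_simps)

lemma Lf_sum_list_pairs: assumes "module sc"
  shows "Lf sc \<phi> (sum_list (map (\<lambda>(x,y). F x y) l)) = sum_list (map (\<lambda>(x,y). Lf sc \<phi> (F x y)) l)"
  by (induction l) (auto simp: Lf_zero Lf_add[OF assms])

locale bialg =
  fixes sm :: "'k::comm_ring_1 \<Rightarrow> 'a::ring_1 \<Rightarrow> 'a"
    and cop :: "'a \<Rightarrow> ('a \<times> 'a) list"
    and eps :: "'a \<Rightarrow> 'k"
  assumes bialg: "bialgebra sm cop eps"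
begin

lemma sm_module: "module sm" using bialg by (simp add: bialgebra_def)

sublocale A: module sm by (rule sm_module)

lemma smL: "sm r (a * b) = sm r a * b" using bialg unfolding bialgebra_def by blast
lemma smR: "sm r (a * b) = a * sm r b" using bialg unfolding bialgebra_def by blast
lemma eps_add: "eps (a + b) = eps a + eps b" using bialg by (simp add: bialgebra_def)
lemma eps_sm: "eps (sm r a) = r * eps a" using bialg by (simp add: bialgebra_def)
lemma eps_mult: "eps (a * b) = eps a * eps b" using bialg by (simp add: bialgebra_def)
lemma eps_one: "eps 1 = 1" using bialg by (simp add: bialgebra_def)
lemma counit1: "sum_list (map (\<lambda>(x, y). sm (eps x) y) (cop a)) = a" using bialg by (simp add: bialgebra_def)
lemma counit2: "sum_list (map (\<lambda>(x, y). sm (eps y) x) (cop a)) = a" using bialg by (simp add: bialgebra_def)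

lemma eps_zero: "eps 0 = 0"
  using eps_add[of 0 0] by simp
lemma eps_diff: "eps (a - b) = eps a - eps b"
  using eps_add[of "a - b" b] by (simp add: algebra_simps)
lemma eps_sum_list: "eps (sum_list (map f l)) = sum_list (map (\<lambda>x. eps (f x)) l)"
  by (induction l) (simp_all add: eps_zero eps_add)
lemma eps_prod_list: "eps (prod_list (map f l)) = prod_list (map (\<lambda>x. eps (f x)) l)"
  by (induction l) (simp_all add: eps_one eps_mult)

definition Csum :: "'a \<Rightarrow> ('a \<Rightarrow> 'a \<Rightarrow> 'v::ab_group_add) \<Rightarrow> 'v" where
  "Csum a \<psi> = sum_list (map (\<lambda>(x,y). \<psi> x y) (cop a))"

lemma Lf_dsum: assumes "module sc"
  shows "Lf sc (phi2 \<psi>) (dsum cop a) = Csum a \<psi>"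
proof -
  interpret V: module sc by fact
  show ?thesis unfolding dsum_def Csum_def
    by (simp add: Lf_sum_list_pairs[OF assms] pt_def Lf_single[OF assms] phi2_def)
qed

lemma D1: assumes "module sc" "bil sm sc \<psi>"
  shows "Csum (a + b) \<psi> = Csum a \<psi> + Csum b \<psi>"
proof -
  have "teq sm (dsum cop (a + b)) (dsum cop a + dsum cop b)"
    using bialg by (simp add: bialgebra_def)
  from Lf_teq[OF assms(1) fml_phi2[OF assms] this] show ?thesis
    by (simp add: Lf_dsum[OF assms(1)] Lf_add[OF assms(1)])
qed

lemma D2: assumes "module sc" "bil sm sc \<psi>"
  shows "Csum (sm r a) \<psi> = sc r (Csum a \<psi>)"
proof -
  interpret V: module sc by fact
  have "teq sm (dsum cop (sm r a)) (sum_list (map (\<lambda>(x, y). Poly_Mapping.single [x, y] r) (cop a)))"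
    using bialg by (simp add: bialgebra_def)
  from Lf_teq[OF assms(1) fml_phi2[OF assms] this] show ?thesis
    by (simp add: Lf_dsum[OF assms(1)] Lf_sum_list_pairs[OF assms(1)] Lf_single[OF assms(1)]
        phi2_def Csum_def scale_sum_list[OF assms(1)] prod.case_distrib)
qed

lemma D3: assumes "module sc" "tril sm sc \<psi>"
  shows "sum_list (map (\<lambda>(x,y). sum_list (map (\<lambda>(u,v). \<psi> u v y) (cop x))) (cop a))
       = sum_list (map (\<lambda>(x,y). sum_list (map (\<lambda>(u,v). \<psi> x u v) (cop y))) (cop a))"
proof -
  interpret V: module sc by fact
  have "teq sm
        (sum_list (map (\<lambda>(x, y). sum_list (map (\<lambda>(u, v). pt [u, v, y]) (cop x))) (cop a)))
        (sum_list (map (\<lambda>(x, y). sum_list (map (\<lambda>(u, v). pt [x, u, v]) (cop y))) (cop a)))"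
    using bialg by (simp add: bialgebra_def)
  from Lf_teq[OF assms(1) fml_phi3[OF assms] this] show ?thesis
    by (simp add: Lf_sum_list_pairs[OF assms(1)] Lf_single[OF assms(1)] pt_def phi3_def)
qed

lemma D4: assumes "module sc" "bil sm sc \<psi>"
  shows "Csum (a * b) \<psi> = sum_list (map (\<lambda>(x,y). sum_list (map (\<lambda>(u,v). \<psi> (x*u) (y*v)) (cop b))) (cop a))"
proof -
  interpret V: module sc by fact
  have "teq sm (dsum cop (a * b))
        (sum_list (map (\<lambda>(x, y). sum_list (map (\<lambda>(u, v). pt [x * u, y * v]) (cop b))) (cop a)))"
    using bialg by (simp add: bialgebra_def)
  from Lf_teq[OF assms(1) fml_phi2[OF assms] this] show ?thesis
    by (simp add: Lf_dsum[OF assms(1)] Lf_sum_list_pairs[OF assms(1)] Lf_single[OF assms(1)] pt_def phi2_def)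
qed

lemma D5: assumes "module sc" "bil sm sc \<psi>"
  shows "Csum 1 \<psi> = \<psi> 1 1"
proof -
  interpret V: module sc by fact
  have "teq sm (dsum cop 1) (pt [1, 1])"
    using bialg by (simp add: bialgebra_def)
  from Lf_teq[OF assms(1) fml_phi2[OF assms] this] show ?thesis
    by (simp add: Lf_dsum[OF assms(1)] Lf_single[OF assms(1)] pt_def phi2_def)
qed

end

lemma sum_list_concat': "sum_list (concat L) = sum_list (map sum_list L)"
  by (induction L) simp_all

lemma sw_Nil[simp]: "swsum cop [] F = F []"
  by (simp add: swsum_def)

lemma sw_Cons: "swsum cop (a#as) F = sum_list (map (\<lambda>(x,y). swsum cop as (\<lambda>c. F ((x,y)#c))) (cop a))"
  by (simp add: swsum_def sum_list_concat' map_concat comp_def split_def)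

lemma sw_cong: "(\<And>c. c \<in> set (product_lists (map cop as)) \<Longrightarrow> F c = G c) \<Longrightarrow> swsum cop as F = swsum cop as G"
  unfolding swsum_def by (metis map_cong)

lemma sw_len: "c \<in> set (product_lists (map cop as)) \<Longrightarrow> length c = length as"
  using in_set_product_lists_length by fastforce

lemma sw_append: "swsum cop (as@bs) F = swsum cop as (\<lambda>c1. swsum cop bs (\<lambda>c2. F (c1@c2)))"
  by (induction as arbitrary: F) (simp_all add: sw_Cons)

lemma sw_add: fixes F :: "_ \<Rightarrow> 'b::comm_monoid_add" shows "swsum cop as (\<lambda>c. F c + G c) = swsum cop as F + swsum cop as G"
  by (simp add: swsum_def sum_list_addf)

lemma sw_zero: "swsum cop as (\<lambda>c. 0) = 0"
  by (simp add: swsum_def)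

lemma sw_diff: fixes F :: "_ \<Rightarrow> 'b::ab_group_add" shows "swsum cop as (\<lambda>c. F c - G c) = swsum cop as F - swsum cop as G"
  by (simp add: swsum_def sum_list_subtractf)

lemma sw_scale: "module sc \<Longrightarrow> sc r (swsum cop as F) = swsum cop as (\<lambda>c. sc r (F c))"
  by (simp add: swsum_def scale_sum_list)

lemma sw_scale_left: "module sc \<Longrightarrow> sc (swsum cop as F) v = swsum cop as (\<lambda>c. sc (F c) v)"
  by (simp add: swsum_def scale_sum_list_left)

lemma sl_swap: fixes F :: "_ \<Rightarrow> _ \<Rightarrow> 'b::comm_monoid_add" shows "sum_list (map (\<lambda>x. sum_list (map (\<lambda>y. F x y) ys)) xs) = sum_list (map (\<lambda>y. sum_list (map (\<lambda>x. F x y) xs)) ys)"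
  by (induction xs) (simp_all add: sum_list_addf)

lemma sw_swap: fixes F :: "_ \<Rightarrow> _ \<Rightarrow> 'b::comm_monoid_add" shows "swsum cop as (\<lambda>c1. swsum cop bs (\<lambda>c2. F c1 c2)) = swsum cop bs (\<lambda>c2. swsum cop as (\<lambda>c1. F c1 c2))"
  unfolding swsum_def by (rule sl_swap)

lemma sw_swap_sl: fixes F :: "_ \<Rightarrow> _ \<Rightarrow> 'b::comm_monoid_add" shows "swsum cop as (\<lambda>c. sum_list (map (\<lambda>y. F c y) ys)) = sum_list (map (\<lambda>y. swsum cop as (\<lambda>c. F c y)) ys)"
  unfolding swsum_def by (rule sl_swap)

lemma bil_sum_list:
  assumes "module sc" "\<And>z. z \<in> set l \<Longrightarrow> bil sm sc (G z)"
  shows "bil sm sc (\<lambda>x y. sum_list (map (\<lambda>z. G z x y) l))"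
  unfolding bil_def
proof (intro conjI allI)
  fix x x' y r
  have b: "\<And>z. z \<in> set l \<Longrightarrow> bil sm sc (G z)" by fact
  have "sum_list (map (\<lambda>z. G z (x + x') y) l) = sum_list (map (\<lambda>z. G z x y + G z x' y) l)"
    by (rule arg_cong[where f=sum_list], rule map_cong[OF refl]) (use b in \<open>simp add: bil_def\<close>)
  then show "sum_list (map (\<lambda>z. G z (x + x') y) l) = sum_list (map (\<lambda>z. G z x y) l) + sum_list (map (\<lambda>z. G z x' y) l)"
    by (simp only: sum_list_addf)
  have "sum_list (map (\<lambda>z. G z x (y + x')) l) = sum_list (map (\<lambda>z. G z x y + G z x x') l)"
    by (rule arg_cong[where f=sum_list], rule map_cong[OF refl]) (use b in \<open>simp add: bil_def\<close>)
  then show "sum_list (map (\<lambda>z. G z x (y + x')) l) = sum_list (map (\<lambda>z. G z x y) l) + sum_list (map (\<lambda>z. G z x x') l)"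
    by (simp only: sum_list_addf)
  have "sum_list (map (\<lambda>z. G z (sm r x) y) l) = sum_list (map (\<lambda>z. sc r (G z x y)) l)"
    by (rule arg_cong[where f=sum_list], rule map_cong[OF refl]) (use b in \<open>simp add: bil_def\<close>)
  then show "sum_list (map (\<lambda>z. G z (sm r x) y) l) = sc r (sum_list (map (\<lambda>z. G z x y) l))"
    by (simp add: scale_sum_list[OF assms(1)])
  have "sum_list (map (\<lambda>z. G z x (sm r y)) l) = sum_list (map (\<lambda>z. sc r (G z x y)) l)"
    by (rule arg_cong[where f=sum_list], rule map_cong[OF refl]) (use b in \<open>simp add: bil_def\<close>)
  then show "sum_list (map (\<lambda>z. G z x (sm r y)) l) = sc r (sum_list (map (\<lambda>z. G z x y) l))"
    by (simp add: scale_sum_list[OF assms(1)])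
qed

lemma tril_sum_list:
  assumes "module sc" "\<And>z. z \<in> set l \<Longrightarrow> tril sm sc (G z)"
  shows "tril sm sc (\<lambda>x y w. sum_list (map (\<lambda>z. G z x y w) l))"
  using assms unfolding tril_def
  by (auto intro!: bil_sum_list[OF assms(1)])

lemma bil_swsum:
  assumes "module sc" "\<And>c. bil sm sc (G c)"
  shows "bil sm sc (\<lambda>x y. swsum cop as (\<lambda>c. G c x y))"
  unfolding swsum_def by (rule bil_sum_list[OF assms(1)]) (use assms(2) in auto)

lemma tril_swsum:
  assumes "module sc" "\<And>c. tril sm sc (G c)"
  shows "tril sm sc (\<lambda>x y w. swsum cop as (\<lambda>c. G c x y w))"
  unfolding swsum_def by (rule tril_sum_list[OF assms(1)]) (use assms(2) in auto)

lemma fml_cochain: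
  assumes "module sc" "cochain sm sc n f" shows "fml sm sc f"
proof -
  interpret V: module sc by fact
  have z: "length xs \<noteq> n \<Longrightarrow> f xs = 0" for xs using assms(2) by (simp add: cochain_def)
  show ?thesis unfolding fml_def
  proof (intro conjI allI)
    fix us vs a b
    show "f (us @ (a + b) # vs) = f (us @ a # vs) + f (us @ b # vs)"
    proof (cases "length us + length vs + 1 = n")
      case True then show ?thesis using assms(2) by (simp add: cochain_def)
    next
      case False then show ?thesis by (simp add: z)
    qed
  next
    fix us vs r a
    show "f (us @ sm r a # vs) = sc r (f (us @ a # vs))"
    proof (cases "length us + length vs + 1 = n")
      case True then show ?thesis using assms(2) by (simp add: cochain_def)
    next
      case False then show ?thesis by (simp add: z)
    qed
  qed
qed

lemma fml_add_pos: "fml sm sc f \<Longrightarrow> f (us@(a+b)#vs) = f (us@a#vs) + f (us@b#vs)"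
  by (simp add: fml_def)
lemma fml_sm_pos: "fml sm sc f \<Longrightarrow> f (us@sm r a#vs) = sc r (f (us@a#vs))"
  by (simp add: fml_def)

definition pml :: "('k::comm_ring_1 \<Rightarrow> 'a::ab_group_add \<Rightarrow> 'a) \<Rightarrow> ('k \<Rightarrow> 'v::ab_group_add \<Rightarrow> 'v) \<Rightarrow> (('a\<times>'a) list \<Rightarrow> 'v) \<Rightarrow> bool" where
  "pml sm sc F \<longleftrightarrow> (\<forall>c1 c2. bil sm sc (\<lambda>x y. F (c1@(x,y)#c2)))"

context bialg begin

lemma Csum_sw: "sum_list (map (\<lambda>(x,y). \<psi> x y) (cop a)) = Csum a \<psi>"
  by (simp add: Csum_def)

lemma sw_add_pos:
  assumes "module sc" "pml sm sc F"
  shows "swsum cop (us@(a+b)#vs) F = swsum cop (us@a#vs) F + swsum cop (us@b#vs) F"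
proof -
  have b: "bil sm sc (\<lambda>x y. swsum cop vs (\<lambda>c. F (c1 @ (x, y) # c)))" for c1
    by (rule bil_swsum[OF assms(1)]) (use assms(2) in \<open>auto simp: pml_def\<close>)
  show ?thesis
    by (simp add: sw_append sw_Cons Csum_sw D1[OF assms(1) b] sw_add)
qed

lemma sw_sm_pos:
  assumes "module sc" "pml sm sc F"
  shows "swsum cop (us@sm r a#vs) F = sc r (swsum cop (us@a#vs) F)"
proof -
  have b: "bil sm sc (\<lambda>x y. swsum cop vs (\<lambda>c. F (c1 @ (x, y) # c)))" for c1
    by (rule bil_swsum[OF assms(1)]) (use assms(2) in \<open>auto simp: pml_def\<close>)
  show ?thesis
    by (simp add: sw_append sw_Cons Csum_sw D2[OF assms(1) b] sw_scale[OF assms(1)])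
qed

definition Ff :: "('a list \<Rightarrow> 'k) \<Rightarrow> ('a \<times> 'a) list \<Rightarrow> 'a" where
  "Ff f ch = sm (f (map snd ch)) (prod_list (map fst ch))"

lemma Ff_eq: "Ff f = (\<lambda>ch. sm (f (map snd ch)) (prod_list (map fst ch)))"
  by (rule ext) (simp add: Ff_def)

lemma lift_sw: "length xs = n \<Longrightarrow> lift sm cop n f xs = swsum cop xs (Ff f)"
  by (simp add: lift_def Ff_eq)

lemma pml_Ff: assumes "fml sm (*) f" shows "pml sm sm (Ff f)"
  unfolding pml_def bil_def Ff_def
proof (intro allI conjI)
  fix c1 c2 :: "('a\<times>'a) list" and x x' y r
  let ?P = "prod_list (map fst c1)" and ?Q = "prod_list (map fst c2)"
  show "sm (f (map snd (c1 @ (x + x', y) # c2))) (prod_list (map fst (c1 @ (x + x', y) # c2))) =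
       sm (f (map snd (c1 @ (x, y) # c2))) (prod_list (map fst (c1 @ (x, y) # c2))) +
       sm (f (map snd (c1 @ (x', y) # c2))) (prod_list (map fst (c1 @ (x', y) # c2)))"
    by (simp add: distrib_left distrib_right A.scale_right_distrib)
  show "sm (f (map snd (c1 @ (x, y + x') # c2))) (prod_list (map fst (c1 @ (x, y + x') # c2))) =
       sm (f (map snd (c1 @ (x, y) # c2))) (prod_list (map fst (c1 @ (x, y) # c2))) +
       sm (f (map snd (c1 @ (x, x') # c2))) (prod_list (map fst (c1 @ (x, x') # c2)))"
    using fml_add_pos[OF assms, of "map snd c1" y x' "map snd c2"]
    by (simp add: A.scale_left_distrib)
  show "sm (f (map snd (c1 @ (sm r x, y) # c2))) (prod_list (map fst (c1 @ (sm r x, y) # c2))) =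
       sm r (sm (f (map snd (c1 @ (x, y) # c2))) (prod_list (map fst (c1 @ (x, y) # c2))))"
    by (simp add: smL[symmetric] smR[symmetric] mult.commute[of r])
  show "sm (f (map snd (c1 @ (x, sm r y) # c2))) (prod_list (map fst (c1 @ (x, sm r y) # c2))) =
       sm r (sm (f (map snd (c1 @ (x, y) # c2))) (prod_list (map fst (c1 @ (x, y) # c2))))"
    using fml_sm_pos[OF assms, of "map snd c1" r y "map snd c2"]
    by (simp add: mult.commute)
qed

lemma L1: assumes "cochain sm (*) n f" shows "cochain sm sm n (lift sm cop n f)"
proof -
  have fm: "fml sm (*) f" by (rule fml_cochain[OF module_mult assms])
  show ?thesis unfolding cochain_def
  proof (intro conjI allI impI)
    fix xs :: "'a list" assume "length xs \<noteq> n" then show "lift sm cop n f xs = 0" by (simp add: lift_def)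
  next
    fix us vs :: "'a list" and a b :: 'a assume l: "length us + length vs + 1 = n"
    show "lift sm cop n f (us @ (a + b) # vs) = lift sm cop n f (us @ a # vs) + lift sm cop n f (us @ b # vs)"
      using l by (simp add: lift_sw sw_add_pos[OF sm_module pml_Ff[OF fm]])
  next
    fix us vs :: "'a list" and r and a :: 'a assume l: "length us + length vs + 1 = n"
    show "lift sm cop n f (us @ sm r a # vs) = sm r (lift sm cop n f (us @ a # vs))"
      using l by (simp add: lift_sw sw_sm_pos[OF sm_module pml_Ff[OF fm]])
  qed
qed

end

lemma bilD:
  assumes "bil sm sc \<psi>"
  shows "\<psi> (x+x') y = \<psi> x y + \<psi> x' y" "\<psi> x (y+y') = \<psi> x y + \<psi> x y'"
    "\<psi> (sm r x) y = sc r (\<psi> x y)" "\<psi> x (sm r y) = sc r (\<psi> x y)"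
  using assms by (simp_all add: bil_def)

definition tml :: "('k::comm_ring_1 \<Rightarrow> 'a::ab_group_add \<Rightarrow> 'a) \<Rightarrow> ('k \<Rightarrow> 'v::ab_group_add \<Rightarrow> 'v) \<Rightarrow> (('a\<times>'a\<times>'a) list \<Rightarrow> 'v) \<Rightarrow> bool" where
  "tml sm sc F \<longleftrightarrow> (\<forall>t1 t2. tril sm sc (\<lambda>x y z. F (t1@(x,y,z)#t2)))"

lemma fml_zero: assumes "fml sm sc f" shows "f (us@0#vs) = 0"
  using fml_add_pos[OF assms, of us 0 0 vs] by simp

lemma fml_sum_list: assumes "fml sm sc f"
  shows "f (us @ sum_list (map h l) # vs) = sum_list (map (\<lambda>z. f (us @ h z # vs)) l)"
  by (induction l) (simp_all add: fml_zero[OF assms] fml_add_pos[OF assms])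

context bialg begin

lemma lift_add: "lift sm cop n (f + g) = lift sm cop n f + lift sm cop n g"
  by (rule ext) (simp add: lift_def swsum_def A.scale_left_distrib sum_list_addf)

lemma lift_zero: "lift sm cop n 0 = 0"
  by (rule ext) (simp add: lift_def swsum_def)

lemma lift_uminus: "lift sm cop n (- f) = - lift sm cop n f"
proof -
  have "lift sm cop n f + lift sm cop n (- f) = 0" using lift_add[of n f "-f"] by (simp add: lift_zero)
  then show ?thesis by (metis minus_unique)
qed

lemma lift_diff: "lift sm cop n (f - g) = lift sm cop n f - lift sm cop n g"
  using lift_add[of n f "-g"] by (simp add: lift_uminus)

lemma lift_sgnc: "lift sm cop n (sgnc k f) = sgnc k (lift sm cop n f)"
  by (simp add: sgnc_def lift_uminus)

lemma lift_sum: "lift sm cop n (\<Sum>i\<in>I. F i) = (\<Sum>i\<in>I. lift sm cop n (F i))"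
proof (induction I rule: infinite_finite_induct)
  case (infinite A) then show ?case by (simp only: sum.infinite[OF infinite] lift_zero)
next
  case empty then show ?case by (simp only: sum.empty lift_zero)
next
  case (insert x J) then show ?case by (simp only: sum.insert[OF insert(1,2)] lift_add insert(3))
qed

lemma lift_scale: "lift sm cop n (\<lambda>xs. r * f xs) = (\<lambda>xs. sm r (lift sm cop n f xs))"
  by (rule ext) (simp add: lift_def swsum_def scale_sum_list[OF sm_module])

lemma CC:
  assumes "fml sm (*) \<Phi>"
  shows "swsum cop vs (\<lambda>c. \<Phi> (us @ map snd c) * prod_list (map (\<lambda>p. eps (fst p)) c)) = \<Phi> (us @ vs)"
proof (induction vs arbitrary: us)
  case Nil then show ?case by simp
next
  case (Cons v vs)
  have inner: "swsum cop vs (\<lambda>c. \<Phi> (us @ y # map snd c) * (eps x * prod_list (map (\<lambda>p. eps (fst p)) c)))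
     = eps x * \<Phi> (us @ y # vs)" for x y
  proof -
    have "swsum cop vs (\<lambda>c. \<Phi> (us @ y # map snd c) * (eps x * prod_list (map (\<lambda>p. eps (fst p)) c)))
       = eps x * swsum cop vs (\<lambda>c. \<Phi> ((us @ [y]) @ map snd c) * prod_list (map (\<lambda>p. eps (fst p)) c))"
      by (simp add: sw_scale[OF module_mult] mult.left_commute)
    also have "\<dots> = eps x * \<Phi> (us @ y # vs)" using Cons.IH[of "us @ [y]"] by simp
    finally show ?thesis .
  qed
  have "swsum cop (v # vs) (\<lambda>c. \<Phi> (us @ map snd c) * prod_list (map (\<lambda>p. eps (fst p)) c))
      = sum_list (map (\<lambda>(x,y). eps x * \<Phi> (us @ y # vs)) (cop v))"
    by (simp add: sw_Cons inner)
  also have "\<dots> = sum_list (map (\<lambda>(x,y). \<Phi> (us @ sm (eps x) y # vs)) (cop v))"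
    by (simp add: fml_sm_pos[OF assms])
  also have "\<dots> = \<Phi> (us @ sum_list (map (\<lambda>(x,y). sm (eps x) y) (cop v)) # vs)"
    by (simp add: fml_sum_list[OF assms] split_def)
  also have "\<dots> = \<Phi> (us @ v # vs)" by (simp add: counit1)
  finally show ?case .
qed

lemma RL: assumes "cochain sm (*) n f" shows "eps (lift sm cop n f xs) = f xs"
proof (cases "length xs = n")
  case True
  have fm: "fml sm (*) f" by (rule fml_cochain[OF module_mult assms])
  have "eps (lift sm cop n f xs) = swsum cop xs (\<lambda>c. f ([] @ map snd c) * prod_list (map (\<lambda>p. eps (fst p)) c))"
    using True by (simp add: lift_def swsum_def eps_sum_list eps_sm eps_prod_list)
  also have "\<dots> = f xs" using CC[OF fm, of xs "[]"] by simp
  finally show ?thesis .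
next
  case False then show ?thesis using assms by (simp add: lift_def cochain_def eps_zero)
qed

lemma bil_counit: "bil sm sm (\<lambda>p q. sm (eps q) p)"
  by (simp add: bil_def A.scale_right_distrib A.scale_left_distrib eps_add eps_sm mult.commute)

lemma L4: "lift sm cop 2 (OA_mu eps) = End_mu"
proof (rule ext)
  fix xs :: "'a list"
  show "lift sm cop 2 (OA_mu eps) xs = End_mu xs"
  proof (cases "length xs = 2")
    case True
    then obtain a b where xs: "xs = [a, b]"
      by (metis (no_types, lifting) One_nat_def Suc_1 length_0_conv length_Suc_conv)
    have "lift sm cop 2 (OA_mu eps) xs = sum_list (map (\<lambda>(x,y). sum_list (map (\<lambda>(u,v). sm (eps (y*v)) (x*u)) (cop b))) (cop a))"
      by (simp add: xs lift_def sw_Cons OA_mu_def split_def)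
    also have "\<dots> = Csum (a*b) (\<lambda>p q. sm (eps q) p)"
      by (simp add: D4[OF sm_module bil_counit])
    also have "\<dots> = a * b" by (simp add: Csum_def counit2)
    finally show ?thesis by (simp add: xs End_mu_def)
  next
    case False then show ?thesis by (simp add: lift_def End_mu_def)
  qed
qed

lemma P:
  assumes "module sc" "bil sm sc \<Phi>"
  shows "Csum (prod_list ps) \<Phi> = swsum cop ps (\<lambda>d. \<Phi> (prod_list (map fst d)) (prod_list (map snd d)))"
  using assms(2)
proof (induction ps arbitrary: \<Phi>)
  case Nil then show ?case by (simp add: D5[OF assms(1)])
next
  case (Cons p ps)
  have b: "bil sm sc (\<lambda>u v. \<Phi> (x * u) (y * v))" for x y
    using Cons.prems by (simp add: bil_def distrib_left smR[symmetric])
  show ?case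
    by (simp add: D4[OF assms(1) Cons.prems] Csum_sw Cons.IH[OF b] sw_Cons)
qed

lemma Csum_sum_list: assumes "module sc" "bil sm sc \<Phi>"
  shows "Csum (sum_list (map F l)) \<Phi> = sum_list (map (\<lambda>z. Csum (F z) \<Phi>) l)"
proof (induction l)
  case Nil
  have "Csum (sm 0 0) \<Phi> = sc 0 (Csum 0 \<Phi>)" by (rule D2[OF assms])
  then show ?case using assms(1) by (simp add: module.scale_zero_left)
next
  case (Cons a l) then show ?case by (simp add: D1[OF assms])
qed

lemma Csum_swsum: assumes "module sc" "bil sm sc \<Phi>"
  shows "Csum (swsum cop B F) \<Phi> = swsum cop B (\<lambda>d. Csum (F d) \<Phi>)"
  unfolding swsum_def by (rule Csum_sum_list[OF assms])

end

lemma map2_L: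
  "length d' = length ys \<Longrightarrow> map fst (map2 (\<lambda>p y. (fst p, snd p, y)) d' ys) = map fst d'"
  "length d' = length ys \<Longrightarrow> map (\<lambda>t. fst (snd t)) (map2 (\<lambda>p y. (fst p, snd p, y)) d' ys) = map snd d'"
  "length d' = length ys \<Longrightarrow> map (\<lambda>t. snd (snd t)) (map2 (\<lambda>p y. (fst p, snd p, y)) d' ys) = ys"
  by (induction d' ys rule: list_induct2) simp_all

lemma map2_R:
  "length xs = length d'' \<Longrightarrow> map fst (map2 (\<lambda>x p. (x, fst p, snd p)) xs d'') = xs"
  "length xs = length d'' \<Longrightarrow> map (\<lambda>t. fst (snd t)) (map2 (\<lambda>x p. (x, fst p, snd p)) xs d'') = map fst d''"
  "length xs = length d'' \<Longrightarrow> map (\<lambda>t. snd (snd t)) (map2 (\<lambda>x p. (x, fst p, snd p)) xs d'') = map snd d''"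
  by (induction xs d'' rule: list_induct2) simp_all

lemma sw_swap_pairs:
  fixes F :: "_ \<Rightarrow> _ \<Rightarrow> _ \<Rightarrow> 'b::comm_monoid_add"
  shows "swsum cop B (\<lambda>d. sum_list (map (\<lambda>(u,v). F d u v) l)) = sum_list (map (\<lambda>(u,v). swsum cop B (\<lambda>d. F d u v)) l)"
  by (induction l) (simp_all add: sw_add sw_zero split_def)

context bialg begin

lemma NC:
  assumes "module sc" "tml sm sc \<Theta>"
  shows "swsum cop B (\<lambda>d. swsum cop (map fst d) (\<lambda>d'. \<Theta> (map2 (\<lambda>p y. (fst p, snd p, y)) d' (map snd d))))
       = swsum cop B (\<lambda>d. swsum cop (map snd d) (\<lambda>d''. \<Theta> (map2 (\<lambda>x p. (x, fst p, snd p)) (map fst d) d'')))"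
  using assms(2)
proof (induction B arbitrary: \<Theta>)
  case Nil then show ?case by simp
next
  case (Cons b B)
  have tC: "tml sm sc (\<lambda>t. \<Theta> ((u,v,y)#t))" for u v y
    unfolding tml_def
  proof (intro allI)
    fix t1 t2
    show "tril sm sc (\<lambda>x ya z. \<Theta> ((u, v, y) # t1 @ (x, ya, z) # t2))"
      using Cons.prems[unfolded tml_def, rule_format, of "(u,v,y)#t1" t2] by simp
  qed
  define W where "W u v y = swsum cop B (\<lambda>d. swsum cop (map snd d) (\<lambda>d''. \<Theta> ((u,v,y) # map2 (\<lambda>x p. (x, fst p, snd p)) (map fst d) d'')))" for u v y
  have t0: "tril sm sc (\<lambda>u v y. \<Theta> ((u,v,y)#t))" for t
    using Cons.prems[unfolded tml_def, rule_format, of "[]" t] by simp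
  have Wt: "tril sm sc W"
    unfolding W_def
    by (intro tril_swsum[OF assms(1)] t0)
  have "swsum cop (b#B) (\<lambda>d. swsum cop (map fst d) (\<lambda>d'. \<Theta> (map2 (\<lambda>p y. (fst p, snd p, y)) d' (map snd d))))
     = sum_list (map (\<lambda>(x,y). swsum cop B (\<lambda>d. sum_list (map (\<lambda>(u,v). swsum cop (map fst d)
          (\<lambda>d'. \<Theta> ((u,v,y) # map2 (\<lambda>p y. (fst p, snd p, y)) d' (map snd d)))) (cop x)))) (cop b))"
    by (simp add: sw_Cons)
  also have "\<dots> = sum_list (map (\<lambda>(x,y). sum_list (map (\<lambda>(u,v). swsum cop B (\<lambda>d. swsum cop (map fst d)
          (\<lambda>d'. \<Theta> ((u,v,y) # map2 (\<lambda>p y. (fst p, snd p, y)) d' (map snd d))))) (cop x))) (cop b))"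
    by (simp only: sw_swap_pairs)
  also have "\<dots> = sum_list (map (\<lambda>(x,y). sum_list (map (\<lambda>(u,v). W u v y) (cop x))) (cop b))"
    unfolding W_def using Cons.IH[OF tC] by simp
  also have "\<dots> = sum_list (map (\<lambda>(x,y). sum_list (map (\<lambda>(u,v). W x u v) (cop y))) (cop b))"
    by (rule D3[OF assms(1) Wt])
  also have "\<dots> = sum_list (map (\<lambda>(x,y). swsum cop B (\<lambda>d. sum_list (map (\<lambda>(u,v). swsum cop (map snd d)
          (\<lambda>d''. \<Theta> ((x,u,v) # map2 (\<lambda>x p. (x, fst p, snd p)) (map fst d) d''))) (cop y)))) (cop b))"
    unfolding W_def
    by (simp only: sw_swap_pairs)
  also have "\<dots> = swsum cop (b#B) (\<lambda>d. swsum cop (map snd d) (\<lambda>d''. \<Theta> (map2 (\<lambda>x p. (x, fst p, snd p)) (map fst d) d'')))"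
    by (simp add: sw_Cons)
  finally show ?case .
qed

end

context bialg begin

lemma tml_K:
  assumes "module sc" "bil sm sc \<Phi>" "fml sm (*) g"
  shows "tml sm sc (\<lambda>t. \<Phi> (prod_list (map fst t)) (sm (g (map (\<lambda>t. snd (snd t)) t)) (prod_list (map (\<lambda>t. fst (snd t)) t))))"
proof -
  interpret V: module sc by fact
  note b = bilD[OF assms(2)]
  show ?thesis
    unfolding tml_def tril_def bil_def
    by (simp add: b distrib_left distrib_right smL[symmetric] smR[symmetric] A.scale_right_distrib
        A.scale_left_distrib V.scale_right_distrib V.scale_left_distrib fml_add_pos[OF assms(3)] fml_sm_pos[OF assms(3)] mult.commute)
qed

lemma K:
  assumes "module sc" "bil sm sc \<Phi>" "fml sm (*) g"
  shows "Csum (swsum cop B (\<lambda>d. sm (g (map snd d)) (prod_list (map fst d)))) \<Phi>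
    = swsum cop B (\<lambda>d. swsum cop (map snd d) (\<lambda>d'. \<Phi> (prod_list (map fst d)) (sm (g (map snd d')) (prod_list (map fst d')))))"
proof -
  interpret V: module sc by fact
  define \<Theta> where "\<Theta> t = \<Phi> (prod_list (map fst t)) (sm (g (map (\<lambda>t. snd (snd t)) t)) (prod_list (map (\<lambda>t. fst (snd t)) t)))" for t
  have tm: "tml sm sc \<Theta>" unfolding \<Theta>_def[abs_def] by (rule tml_K[OF assms])
  have "Csum (swsum cop B (\<lambda>d. sm (g (map snd d)) (prod_list (map fst d)))) \<Phi>
      = swsum cop B (\<lambda>d. sc (g (map snd d)) (swsum cop (map fst d) (\<lambda>d''. \<Phi> (prod_list (map fst d'')) (prod_list (map snd d'')))))"
    by (simp add: Csum_swsum[OF assms(1,2)] D2[OF assms(1,2)] P[OF assms(1,2)])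
  also have "\<dots> = swsum cop B (\<lambda>d. swsum cop (map fst d) (\<lambda>d'. \<Theta> (map2 (\<lambda>p y. (fst p, snd p, y)) d' (map snd d))))"
  proof (rule sw_cong)
    fix d assume d: "d \<in> set (product_lists (map cop B))"
    show "sc (g (map snd d)) (swsum cop (map fst d) (\<lambda>d''. \<Phi> (prod_list (map fst d'')) (prod_list (map snd d''))))
      = swsum cop (map fst d) (\<lambda>d'. \<Theta> (map2 (\<lambda>p y. (fst p, snd p, y)) d' (map snd d)))"
      unfolding sw_scale[OF assms(1)]
    proof (rule sw_cong)
      fix d' assume d': "d' \<in> set (product_lists (map cop (map fst d)))"
      have l: "length d' = length (map snd d)" using sw_len[OF d'] by simp
      show "sc (g (map snd d)) (\<Phi> (prod_list (map fst d')) (prod_list (map snd d')))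
          = \<Theta> (map2 (\<lambda>p y. (fst p, snd p, y)) d' (map snd d))"
        unfolding \<Theta>_def using map2_L[OF l] by (simp add: bilD(4)[OF assms(2)])
    qed
  qed
  also have "\<dots> = swsum cop B (\<lambda>d. swsum cop (map snd d) (\<lambda>d''. \<Theta> (map2 (\<lambda>x p. (x, fst p, snd p)) (map fst d) d'')))"
    by (rule NC[OF assms(1) tm])
  also have "\<dots> = swsum cop B (\<lambda>d. swsum cop (map snd d) (\<lambda>d'. \<Phi> (prod_list (map fst d)) (sm (g (map snd d')) (prod_list (map fst d')))))"
  proof (rule sw_cong)
    fix d assume d: "d \<in> set (product_lists (map cop B))"
    show "swsum cop (map snd d) (\<lambda>d''. \<Theta> (map2 (\<lambda>x p. (x, fst p, snd p)) (map fst d) d''))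
       = swsum cop (map snd d) (\<lambda>d'. \<Phi> (prod_list (map fst d)) (sm (g (map snd d')) (prod_list (map fst d'))))"
    proof (rule sw_cong)
      fix d' assume d': "d' \<in> set (product_lists (map cop (map snd d)))"
      have l: "length (map fst d) = length d'" using sw_len[OF d'] by simp
      show "\<Theta> (map2 (\<lambda>x p. (x, fst p, snd p)) (map fst d) d') = \<Phi> (prod_list (map fst d)) (sm (g (map snd d')) (prod_list (map fst d')))"
        unfolding \<Theta>_def using map2_R[OF l] by simp
    qed
  qed
  finally show ?thesis .
qed

end

context bialg begin

lemma L5:
  assumes f: "cochain sm (*) m f" and g: "cochain sm (*) n g"
  shows "lift sm cop (m + n - 1) (OA_comp sm cop m n i f g) = End_comp m n i (lift sm cop m f) (lift sm cop n g)"
proof (rule ext)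
  fix xs :: "'a list"
  have fm: "fml sm (*) f" by (rule fml_cochain[OF module_mult f])
  have gm: "fml sm (*) g" by (rule fml_cochain[OF module_mult g])
  show "lift sm cop (m + n - 1) (OA_comp sm cop m n i f g) xs = End_comp m n i (lift sm cop m f) (lift sm cop n g) xs"
  proof (cases "length xs = m + n - 1 \<and> 1 \<le> i \<and> i \<le> m")
    case False
    then show ?thesis
      by (auto simp: lift_def End_comp_def OA_comp_def swsum_def)
  next
    case True
    then have len: "length xs = m + n - 1" and i1: "1 \<le> i" and im: "i \<le> m" by auto
    define A where "A = take (i - 1) xs"
    define B where "B = take n (drop (i - 1) xs)"
    define C where "C = drop (i - 1 + n) xs"
    have lA: "length A = i - 1" using len i1 im by (simp add: A_def)
    have lB: "length B = n" using len i1 im by (simp add: B_def)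
    have lC: "length C = m - i" using len i1 im by (simp add: C_def)
    have xs: "xs = A @ B @ C" unfolding A_def B_def C_def
      by (metis append_take_drop_id drop_drop add.commute)
    define c where "c = lift sm cop n g B"
    have c_eq: "c = swsum cop B (\<lambda>d. sm (g (map snd d)) (prod_list (map fst d)))"
      unfolding c_def using lB by (simp add: lift_def)
    define \<Psi> where "\<Psi> = (\<lambda>cA x y. swsum cop C (\<lambda>cC. Ff f (cA @ (x,y) # cC)))"
    have bP: "bil sm sm (\<Psi> cA)" for cA
      unfolding \<Psi>_def using pml_Ff[OF fm] unfolding pml_def
      by (intro bil_swsum[OF sm_module]) blast
    have "End_comp m n i (lift sm cop m f) (lift sm cop n g) xs = lift sm cop m f (A @ c # C)"
      using True by (simp add: End_comp_def A_def B_def C_def c_def)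
    also have "\<dots> = swsum cop (A @ c # C) (Ff f)"
      using lA lC i1 im by (simp add: lift_sw)
    also have "\<dots> = swsum cop A (\<lambda>cA. Csum c (\<Psi> cA))"
      by (simp add: sw_append sw_Cons Csum_sw \<Psi>_def)
    also have "\<dots> = swsum cop A (\<lambda>cA. swsum cop B (\<lambda>cB. swsum cop (map snd cB) (\<lambda>d.
          \<Psi> cA (prod_list (map fst cB)) (sm (g (map snd d)) (prod_list (map fst d))))))"
      unfolding c_eq by (simp add: K[OF sm_module bP gm])
    also have "\<dots> = swsum cop A (\<lambda>cA. swsum cop B (\<lambda>cB. swsum cop C (\<lambda>cC. swsum cop (map snd cB) (\<lambda>d.
          sm (f (map snd cA @ sm (g (map snd d)) (prod_list (map fst d)) # map snd cC))
             (prod_list (map fst cA) * (prod_list (map fst cB) * prod_list (map fst cC)))))))"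
      unfolding \<Psi>_def by (simp add: sw_swap[of cop "map snd _" C] Ff_def)
    also have "\<dots> = swsum cop A (\<lambda>cA. swsum cop B (\<lambda>cB. swsum cop C (\<lambda>cC.
          sm (OA_comp sm cop m n i f g (map snd (cA @ cB @ cC))) (prod_list (map fst (cA @ cB @ cC))))))"
    proof (intro sw_cong)
      fix cA cB cC
      assume a: "cA \<in> set (product_lists (map cop A))" and b: "cB \<in> set (product_lists (map cop B))"
        and cc: "cC \<in> set (product_lists (map cop C))"
      have la: "length cA = i - 1" using sw_len[OF a] lA by simp
      have lb: "length cB = n" using sw_len[OF b] lB by simp
      have lc: "length cC = m - i" using sw_len[OF cc] lC by simp
      have ll: "length (map snd (cA @ cB @ cC)) = m + n - 1" using la lb lc i1 im by simp
      have "OA_comp sm cop m n i f g (map snd (cA @ cB @ cC)) =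
         swsum cop (map snd cB) (\<lambda>d. f (map snd cA @ sm (g (map snd d)) (prod_list (map fst d)) # map snd cC))"
        using ll i1 im la lb by (simp add: OA_comp_def)
      then show "swsum cop (map snd cB) (\<lambda>d.
          sm (f (map snd cA @ sm (g (map snd d)) (prod_list (map fst d)) # map snd cC))
             (prod_list (map fst cA) * (prod_list (map fst cB) * prod_list (map fst cC))))
        = sm (OA_comp sm cop m n i f g (map snd (cA @ cB @ cC))) (prod_list (map fst (cA @ cB @ cC)))"
        by (simp add: sw_scale_left[OF sm_module])
    qed
    also have "\<dots> = swsum cop xs (Ff (OA_comp sm cop m n i f g))"
      unfolding xs by (simp add: sw_append Ff_def)
    also have "\<dots> = lift sm cop (m + n - 1) (OA_comp sm cop m n i f g) xs"
      using len by (simp add: lift_sw)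
    finally show ?thesis by simp
  qed
qed

end

context bialg begin

lemma mu_cochain: "cochain sm (*) 2 (OA_mu eps)"
  unfolding cochain_def
proof (intro conjI allI impI)
  fix xs :: "'a list" assume "length xs \<noteq> 2" then show "OA_mu eps xs = 0" by (simp add: OA_mu_def)
next
  fix us vs :: "'a list" and a b :: 'a assume l: "length us + length vs + 1 = 2"
  then have "length (us @ (a+b) # vs) = 2" by simp
  from len_cases2[OF this] show "OA_mu eps (us @ (a + b) # vs) = OA_mu eps (us @ a # vs) + OA_mu eps (us @ b # vs)"
    by (auto simp: OA_mu_def distrib_left distrib_right eps_add)
next
  fix us vs :: "'a list" and r and a :: 'a assume l: "length us + length vs + 1 = 2"
  then have "length (us @ a # vs) = 2" by simp
  from len_cases2[OF this] show "OA_mu eps (us @ sm r a # vs) = r * OA_mu eps (us @ a # vs)"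
    by (auto simp: OA_mu_def smL[symmetric] smR[symmetric] eps_sm)
qed

lemma L6:
  assumes f: "cochain sm (*) n f"
  shows "lift sm cop (n + 1) (opd (OA_comp sm cop) (OA_mu eps) n f) = opd End_comp End_mu n (lift sm cop n f)"
proof -
  have e1: "lift sm cop (n+1) (OA_comp sm cop 2 n j (OA_mu eps) f) = End_comp 2 n j End_mu (lift sm cop n f)" for j
    using L5[OF mu_cochain f, of j] by (simp add: L4)
  have e2: "lift sm cop (n+1) (OA_comp sm cop n 2 j f (OA_mu eps)) = End_comp n 2 j (lift sm cop n f) End_mu" for j
    using L5[OF f mu_cochain, of j] by (simp add: L4)
  show ?thesis
    unfolding opd_def by (simp only: lift_add lift_sum lift_sgnc e1 e2)
qed

definition RR :: "('a list \<Rightarrow> 'a) \<Rightarrow> 'a list \<Rightarrow> 'k" where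
  "RR H = (\<lambda>xs. eps (H xs))"

lemma RR_add: "RR (F + G) = RR F + RR G" by (rule ext) (simp add: RR_def eps_add)
lemma RR_uminus: "RR (- F) = - RR F"
  by (rule ext) (metis RR_def add_eq_0_iff2 eps_add eps_zero uminus_apply add.right_inverse)
lemma RR_diff: "RR (F - G) = RR F - RR G" by (rule ext) (simp add: RR_def eps_diff)
lemma RR_sgnc: "RR (sgnc k F) = sgnc k (RR F)" by (simp add: sgnc_def RR_uminus)
lemma RR_zero: "RR 0 = 0" by (rule ext) (simp add: RR_def eps_zero)
lemma RR_sum: "RR (\<Sum>i\<in>I. F i) = (\<Sum>i\<in>I. RR (F i))"
proof (induction I rule: infinite_finite_induct)
  case (infinite A) then show ?case by (simp only: sum.infinite[OF infinite] RR_zero)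
next
  case empty then show ?case by (simp only: sum.empty RR_zero)
next
  case (insert x J) then show ?case by (simp only: sum.insert[OF insert(1,2)] RR_add insert(3))
qed

lemma RR_cochain: assumes "cochain sm sm k H" shows "cochain sm (*) k (RR H)"
  using assms unfolding cochain_def RR_def by (simp add: eps_add eps_sm eps_zero)

lemma R1: assumes H: "cochain sm sm k H"
  shows "RR (End_comp 2 k 2 End_mu H) = OA_comp sm cop 2 k 2 (OA_mu eps) (RR H)"
proof (rule ext)
  fix xs :: "'a list"
  have fm: "fml sm (*) (RR H)" by (rule fml_cochain[OF module_mult RR_cochain[OF H]])
  show "RR (End_comp 2 k 2 End_mu H) xs = OA_comp sm cop 2 k 2 (OA_mu eps) (RR H) xs"
  proof (cases "length xs = k + 1")
    case True
    then obtain x0 rest where xs: "xs = x0 # rest" and lr: "length rest = k"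
      by (cases xs) auto
    have "OA_comp sm cop 2 k 2 (OA_mu eps) (RR H) xs
        = swsum cop rest (\<lambda>ch. eps x0 * (RR H ([] @ map snd ch) * prod_list (map (\<lambda>p. eps (fst p)) ch)))"
      using lr by (simp add: xs OA_comp_def OA_mu_def eps_mult eps_sm eps_prod_list RR_def)
    also have "\<dots> = eps x0 * RR H rest"
      using CC[OF fm, of rest "[]"] by (simp add: sw_scale[OF module_mult, symmetric])
    finally show ?thesis using lr by (simp add: xs End_comp_def End_mu_def RR_def eps_mult)
  next
    case False then show ?thesis by (simp add: End_comp_def OA_comp_def RR_def eps_zero)
  qed
qed

lemma R3: assumes H: "cochain sm sm k H"
  shows "RR (End_comp 2 k 1 End_mu H) = OA_comp sm cop 2 k 1 (OA_mu eps) (RR H)"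
proof (rule ext)
  fix xs :: "'a list"
  have fm: "fml sm (*) (RR H)" by (rule fml_cochain[OF module_mult RR_cochain[OF H]])
  show "RR (End_comp 2 k 1 End_mu H) xs = OA_comp sm cop 2 k 1 (OA_mu eps) (RR H) xs"
  proof (cases "length xs = k + 1")
    case True
    then obtain xl ini where xs: "xs = ini @ [xl]" and lr: "length ini = k"
      by (metis add_diff_cancel_right' append_butlast_last_id length_butlast length_greater_0_conv zero_less_Suc Suc_eq_plus1)
    have "OA_comp sm cop 2 k 1 (OA_mu eps) (RR H) xs
        = swsum cop ini (\<lambda>ch. (RR H ([] @ map snd ch) * prod_list (map (\<lambda>p. eps (fst p)) ch)) * eps xl)"
      using lr by (simp add: xs OA_comp_def OA_mu_def eps_mult eps_sm eps_prod_list RR_def)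
    also have "\<dots> = RR H ini * eps xl"
      using CC[OF fm, of ini "[]"] by (simp add: sum_list_mult_const swsum_def)
    finally show ?thesis using lr by (simp add: xs End_comp_def End_mu_def RR_def eps_mult)
  next
    case False then show ?thesis by (simp add: End_comp_def OA_comp_def RR_def eps_zero)
  qed
qed

lemma R2: assumes H: "cochain sm sm k H"
  shows "RR (End_comp k 2 i H End_mu) = OA_comp sm cop k 2 i (RR H) (OA_mu eps)"
proof (rule ext)
  fix xs :: "'a list"
  have fm: "fml sm (*) (RR H)" by (rule fml_cochain[OF module_mult RR_cochain[OF H]])
  show "RR (End_comp k 2 i H End_mu) xs = OA_comp sm cop k 2 i (RR H) (OA_mu eps) xs"
  proof (cases "length xs = k + 1 \<and> 1 \<le> i \<and> i \<le> k")
    case True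
    define A where "A = take (i - 1) xs"
    define C where "C = drop (i - 1 + 2) xs"
    obtain a b where ab: "take 2 (drop (i - 1) xs) = [a, b]"
    proof -
      have "length (take 2 (drop (i - 1) xs)) = 2" using True by (auto simp: min_def)
      then show ?thesis using that
        by (metis (no_types, lifting) One_nat_def Suc_1 length_0_conv length_Suc_conv)
    qed
    define \<psi> where "\<psi> = (\<lambda>p q. RR H (A @ sm (eps q) p # C))"
    have b\<psi>: "bil sm (*) \<psi>"
      unfolding bil_def \<psi>_def
      by (simp add: fml_add_pos[OF fm] fml_sm_pos[OF fm] A.scale_right_distrib A.scale_left_distrib
          eps_add eps_sm mult.commute)
    have "OA_comp sm cop k 2 i (RR H) (OA_mu eps) xs
        = sum_list (map (\<lambda>(x,y). sum_list (map (\<lambda>(u,v). \<psi> (x*u) (y*v)) (cop b))) (cop a))"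
      using True by (simp add: OA_comp_def ab[simplified] sw_Cons OA_mu_def \<psi>_def A_def C_def split_def)
    also have "\<dots> = Csum (a*b) \<psi>" by (simp add: D4[OF module_mult b\<psi>])
    also have "\<dots> = RR H (A @ sum_list (map (\<lambda>(x, y). sm (eps y) x) (cop (a*b))) # C)"
      by (simp add: Csum_def \<psi>_def fml_sum_list[OF fm] split_def)
    also have "\<dots> = RR H (A @ (a*b) # C)" by (simp add: counit2)
    finally show ?thesis using True
      by (simp add: End_comp_def End_mu_def ab[simplified] RR_def A_def C_def)
  next
    case False then show ?thesis by (auto simp: End_comp_def OA_comp_def RR_def eps_zero)
  qed
qed

lemma Rd: assumes H: "cochain sm sm k H"
  shows "RR (opd End_comp End_mu k H) = opd (OA_comp sm cop) (OA_mu eps) k (RR H)"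
  unfolding opd_def
  by (simp only: RR_add RR_sum RR_sgnc R1[OF H] R2[OF H] R3[OF H])

lemma RL_fun: assumes "cochain sm (*) n f" shows "RR (lift sm cop n f) = f"
  by (rule ext) (simp add: RR_def RL[OF assms])

lemma X_closed: assumes f: "cochain sm (*) m f"
  shows "OA_comp sm cop 2 m 1 (OA_mu eps) f = (\<lambda>xs. if length xs = m + 1 then f (butlast xs) * eps (last xs) else 0)"
proof -
  have "OA_comp sm cop 2 m 1 (OA_mu eps) f = RR (End_comp 2 m 1 End_mu (lift sm cop m f))"
    using R3[OF L1[OF f]] by (simp add: RL_fun[OF f])
  also have "\<dots> = (\<lambda>xs. if length xs = m + 1 then f (butlast xs) * eps (last xs) else 0)"
  proof (rule ext)
    fix xs :: "'a list"
    show "RR (End_comp 2 m 1 End_mu (lift sm cop m f)) xs = (if length xs = m + 1 then f (butlast xs) * eps (last xs) else 0)"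
    proof (cases "length xs = m + 1")
      case True
      then obtain xl ini where xs: "xs = ini @ [xl]" and lr: "length ini = m"
        by (metis add_diff_cancel_right' append_butlast_last_id length_butlast length_greater_0_conv zero_less_Suc Suc_eq_plus1)
      show ?thesis using lr
        by (simp add: xs End_comp_def End_mu_def RR_def eps_mult RL[OF f])
    next
      case False then show ?thesis by (simp add: End_comp_def RR_def eps_zero)
    qed
  qed
  finally show ?thesis .
qed

lemma X_cochain: assumes f: "cochain sm (*) m f"
  shows "cochain sm (*) (m + 1) (OA_comp sm cop 2 m 1 (OA_mu eps) f)"
proof -
  have fm: "fml sm (*) f" by (rule fml_cochain[OF module_mult f])
  show ?thesis
    unfolding X_closed[OF f] cochain_def
    by (auto simp: butlast_append fml_add_pos[OF fm] fml_sm_pos[OF fm] eps_add eps_sm distrib_left distrib_right)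
qed

end

context bialg begin

lemma End_opd_zero: "opd End_comp End_mu k (0 :: 'a list \<Rightarrow> 'a) = 0"
proof -
  have a: "End_comp 2 k 2 End_mu (0 :: 'a list \<Rightarrow> 'a) = 0"
    by (rule ext) (auto simp: End_comp_def End_mu_def nth_append min_def)
  have b: "End_comp k 2 i (0 :: 'a list \<Rightarrow> 'a) End_mu = 0" for i
    by (rule ext) (simp add: End_comp_def)
  have c: "End_comp 2 k 1 End_mu (0 :: 'a list \<Rightarrow> 'a) = 0"
    by (rule ext) (auto simp: End_comp_def End_mu_def)
  have d: "sgnc j (0::'a list \<Rightarrow> 'a) = 0" for j by (simp add: sgnc_def)
  show ?thesis unfolding opd_def a b c d by simp
qed

lemma HHrefl: "HHEq sm N F F"
proof (cases "N = 0")
  case True then show ?thesis by (simp add: HHEq_def cohom_def)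
next
  case False
  have "cochain sm sm (N - 1) (0 :: 'a list \<Rightarrow> 'a)" by (simp add: cochain_def)
  then have "\<exists>h. cochain sm sm (N - 1) h \<and> F - F = opd End_comp End_mu (N - 1) h"
    by (intro exI[of _ 0]) (simp add: End_opd_zero)
  then show ?thesis using False by (simp add: HHEq_def cohom_def)
qed

end

theorem theorem4p2:
  fixes sm :: "'k::comm_ring_1 \<Rightarrow> 'a::ring_1 \<Rightarrow> 'a"
    and cop :: "'a \<Rightarrow> ('a \<times> 'a) list"
    and eps :: "'a \<Rightarrow> 'k"
  assumes "bialgebra sm cop eps"
  shows
    \<comment> \<open>lift is a k-linear map of cochains in each degree\<close>
    "(\<forall>n f. cochain sm (*) n f \<longrightarrow> cochain sm sm n (lift sm cop n f))
   \<and> (\<forall>n f g. cochain sm (*) n f \<longrightarrow> cochain sm (*) n g \<longrightarrow>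
        lift sm cop n (f + g) = lift sm cop n f + lift sm cop n g)
   \<and> (\<forall>n r f. cochain sm (*) n f \<longrightarrow>
        lift sm cop n (\<lambda>xs. r * f xs) = (\<lambda>xs. sm r (lift sm cop n f xs)))
    \<comment> \<open>it induces a well-defined map on cohomology\<close>
   \<and> (\<forall>n f. ExtCocycle sm cop eps n f \<longrightarrow> HHCocycle sm n (lift sm cop n f))
   \<and> (\<forall>n f g. ExtCocycle sm cop eps n f \<longrightarrow> ExtCocycle sm cop eps n g \<longrightarrow>
        ExtEq sm cop eps n f g \<longrightarrow> HHEq sm n (lift sm cop n f) (lift sm cop n g))
    \<comment> \<open>which is injective\<close>
   \<and> (\<forall>n f g. ExtCocycle sm cop eps n f \<longrightarrow> ExtCocycle sm cop eps n g \<longrightarrow>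
        HHEq sm n (lift sm cop n f) (lift sm cop n g) \<longrightarrow> ExtEq sm cop eps n f g)
    \<comment> \<open>and a morphism of Gerstenhaber algebras: unit, cup product and bracket\<close>
   \<and> lift sm cop 0 OA_e = End_e
   \<and> (\<forall>m n f g. ExtCocycle sm cop eps m f \<longrightarrow> ExtCocycle sm cop eps n g \<longrightarrow>
        HHEq sm (m + n)
          (lift sm cop (m + n) (opcup (OA_comp sm cop) (OA_mu eps) m n f g))
          (opcup End_comp End_mu m n (lift sm cop m f) (lift sm cop n g)))
   \<and> (\<forall>m n f g. ExtCocycle sm cop eps m f \<longrightarrow> ExtCocycle sm cop eps n g \<longrightarrow>
        HHEq sm (m + n - 1)
          (lift sm cop (m + n - 1) (opbr (OA_comp sm cop) m n f g))
          (opbr End_comp m n (lift sm cop m f) (lift sm cop n g)))"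
proof -
  interpret bialg sm cop eps by (rule bialg.intro[OF assms])
  have P1: "\<forall>n f. cochain sm (*) n f \<longrightarrow> cochain sm sm n (lift sm cop n f)"
    using L1 by blast
  have P2: "\<forall>n f g. cochain sm (*) n f \<longrightarrow> cochain sm (*) n g \<longrightarrow>
        lift sm cop n (f + g) = lift sm cop n f + lift sm cop n g"
    using lift_add by blast
  have P3: "\<forall>n r f. cochain sm (*) n f \<longrightarrow>
        lift sm cop n (\<lambda>xs. r * f xs) = (\<lambda>xs. sm r (lift sm cop n f xs))"
    using lift_scale by blast
  have P4: "\<forall>n f. ExtCocycle sm cop eps n f \<longrightarrow> HHCocycle sm n (lift sm cop n f)"
  proof (intro allI impI)
    fix n f assume "ExtCocycle sm cop eps n f"
    then have f: "cochain sm (*) n f" and d: "opd (OA_comp sm cop) (OA_mu eps) n f = 0"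
      by (auto simp: ExtCocycle_def cocyc_def)
    show "HHCocycle sm n (lift sm cop n f)"
      unfolding HHCocycle_def cocyc_def
      using L1[OF f] L6[OF f] d by (simp add: lift_zero)
  qed
  have P5: "\<forall>n f g. ExtCocycle sm cop eps n f \<longrightarrow> ExtCocycle sm cop eps n g \<longrightarrow>
        ExtEq sm cop eps n f g \<longrightarrow> HHEq sm n (lift sm cop n f) (lift sm cop n g)"
  proof (intro allI impI)
    fix n f g assume "ExtCocycle sm cop eps n f" "ExtCocycle sm cop eps n g" and e: "ExtEq sm cop eps n f g"
    show "HHEq sm n (lift sm cop n f) (lift sm cop n g)"
    proof (cases "n = 0")
      case True then show ?thesis using e by (simp add: ExtEq_def HHEq_def cohom_def)
    next
      case False
      then obtain h where h: "cochain sm (*) (n - 1) h" and fg: "f - g = opd (OA_comp sm cop) (OA_mu eps) (n - 1) h"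
        using e by (auto simp: ExtEq_def cohom_def)
      have "lift sm cop n f - lift sm cop n g = lift sm cop (n - 1 + 1) (opd (OA_comp sm cop) (OA_mu eps) (n - 1) h)"
        using False by (simp add: lift_diff[symmetric] fg)
      also have "\<dots> = opd End_comp End_mu (n - 1) (lift sm cop (n - 1) h)" by (rule L6[OF h])
      finally show ?thesis using False L1[OF h] unfolding HHEq_def cohom_def by auto
    qed
  qed
  have P6: "\<forall>n f g. ExtCocycle sm cop eps n f \<longrightarrow> ExtCocycle sm cop eps n g \<longrightarrow>
        HHEq sm n (lift sm cop n f) (lift sm cop n g) \<longrightarrow> ExtEq sm cop eps n f g"
  proof (intro allI impI)
    fix n f g assume cf: "ExtCocycle sm cop eps n f" and cg: "ExtCocycle sm cop eps n g"
      and e: "HHEq sm n (lift sm cop n f) (lift sm cop n g)"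
    have f: "cochain sm (*) n f" and g: "cochain sm (*) n g" using cf cg by (auto simp: ExtCocycle_def cocyc_def)
    show "ExtEq sm cop eps n f g"
    proof (cases "n = 0")
      case True
      then have "lift sm cop n f = lift sm cop n g" using e by (simp add: HHEq_def cohom_def)
      then have "RR (lift sm cop n f) = RR (lift sm cop n g)" by simp
      then have "f = g" by (simp only: RL_fun[OF f] RL_fun[OF g])
      then show ?thesis using True by (simp add: ExtEq_def cohom_def)
    next
      case False
      then obtain H where H: "cochain sm sm (n - 1) H" and fg: "lift sm cop n f - lift sm cop n g = opd End_comp End_mu (n - 1) H"
        using e by (auto simp: HHEq_def cohom_def)
      have "f - g = RR (lift sm cop n f - lift sm cop n g)"
        by (simp add: RR_diff RL_fun[OF f] RL_fun[OF g])
      also have "\<dots> = opd (OA_comp sm cop) (OA_mu eps) (n - 1) (RR H)" by (simp only: fg Rd[OF H])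
      finally show ?thesis using False RR_cochain[OF H] unfolding ExtEq_def cohom_def by auto
    qed
  qed
  have P7: "lift sm cop 0 OA_e = End_e"
    by (rule ext) (simp add: lift_def OA_e_def End_e_def)
  have P8: "\<forall>m n f g. ExtCocycle sm cop eps m f \<longrightarrow> ExtCocycle sm cop eps n g \<longrightarrow>
        HHEq sm (m + n)
          (lift sm cop (m + n) (opcup (OA_comp sm cop) (OA_mu eps) m n f g))
          (opcup End_comp End_mu m n (lift sm cop m f) (lift sm cop n g))"
  proof (intro allI impI)
    fix m n f g assume cf: "ExtCocycle sm cop eps m f" and cg: "ExtCocycle sm cop eps n g"
    have f: "cochain sm (*) m f" and g: "cochain sm (*) n g" using cf cg by (auto simp: ExtCocycle_def cocyc_def)
    have X: "lift sm cop (m + 1) (OA_comp sm cop 2 m 1 (OA_mu eps) f) = End_comp 2 m 1 End_mu (lift sm cop m f)"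
      using L5[OF mu_cochain f, of 1] by (simp add: L4)
    have "lift sm cop (m + n) (opcup (OA_comp sm cop) (OA_mu eps) m n f g)
        = opcup End_comp End_mu m n (lift sm cop m f) (lift sm cop n g)"
      using L5[OF X_cochain[OF f] g, of "m + 1", unfolded X] by (simp add: opcup_def)
    then show "HHEq sm (m + n)
          (lift sm cop (m + n) (opcup (OA_comp sm cop) (OA_mu eps) m n f g))
          (opcup End_comp End_mu m n (lift sm cop m f) (lift sm cop n g))"
      by (simp add: HHrefl)
  qed
  have P9: "\<forall>m n f g. ExtCocycle sm cop eps m f \<longrightarrow> ExtCocycle sm cop eps n g \<longrightarrow>
        HHEq sm (m + n - 1)
          (lift sm cop (m + n - 1) (opbr (OA_comp sm cop) m n f g))
          (opbr End_comp m n (lift sm cop m f) (lift sm cop n g))"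
  proof (intro allI impI)
    fix m n f g assume cf: "ExtCocycle sm cop eps m f" and cg: "ExtCocycle sm cop eps n g"
    have f: "cochain sm (*) m f" and g: "cochain sm (*) n g" using cf cg by (auto simp: ExtCocycle_def cocyc_def)
    have e1: "lift sm cop (m + n - 1) (OA_comp sm cop m n i f g) = End_comp m n i (lift sm cop m f) (lift sm cop n g)" for i
      by (rule L5[OF f g])
    have e2: "lift sm cop (m + n - 1) (OA_comp sm cop n m i g f) = End_comp n m i (lift sm cop n g) (lift sm cop m f)" for i
      using L5[OF g f, of i] by (simp add: add.commute)
    have "lift sm cop (m + n - 1) (opbr (OA_comp sm cop) m n f g) = opbr End_comp m n (lift sm cop m f) (lift sm cop n g)"
      unfolding opbr_def opbar_def by (simp only: lift_diff lift_sgnc lift_sum e1 e2)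
    then show "HHEq sm (m + n - 1)
          (lift sm cop (m + n - 1) (opbr (OA_comp sm cop) m n f g))
          (opbr End_comp m n (lift sm cop m f) (lift sm cop n g))"
      by (simp add: HHrefl)
  qed
  show ?thesis using P1 P2 P3 P4 P5 P6 P7 P8 P9 by blast
qed

end
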